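(* Let $V$ be an $n$-dimensional vector space over a field of characteristic zero, let $A^{a_1\dots a_p}$ and $B_{a_1\dots a_p}$ be $p$-forms with $A$ simple, and assume $n\neq 2p$. Let $T=T^a{}_b\{A,B\}=A^{ac_2\dots c_p}B_{bc_2\dots c_p}-\frac{1}{2p}A^{c_1\dots c_p}B_{c_1\dots c_p}\delta^a_b$. Then for every positive integer $k$, $$[T^k]=\begin{cases}\dfrac{n}{(n-2p)^k}[T]^k & \text{if $k$ is even},\\[2mm] \dfrac{1}{(n-2p)^{k-1}}[T]^k & \text{if $k$ is odd}.\end{cases}$$
   Context: Index-free notation: $T^k$ is the $k$-fold composition of the $(1,1)$-tensor $T^a{}_b$ with itself and $[X]=X^c{}_c$ denotes the trace. A $p$-form $A$ is simple if $A^{a_1\dots a_p}=u^{[a_1}\cdots w^{a_p]}$ for some vectors $u,\dots,w$. No metric is assumed. *)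

theory Defs
  imports Main "HOL-Combinatorics.Permutations" "HOL-Library.Cardinality"
begin

text \<open>Tensors on V = 'a^n with n = CARD('n), components w.r.t. a fixed basis indexed by 'n.
  A p-index array is a function on index lists; only lists of length p matter.\<close>

definition pform :: "nat \<Rightarrow> ('n list \<Rightarrow> 'a::field) \<Rightarrow> bool" where
  "pform p A \<longleftrightarrow> (\<forall>xs i j. length xs = p \<longrightarrow> i < p \<longrightarrow> j < p \<longrightarrow> i \<noteq> j \<longrightarrow>
      A (xs[i := xs ! j, j := xs ! i]) = - A xs)"

definition simple_form :: "nat \<Rightarrow> ('n list \<Rightarrow> 'a::field_char_0) \<Rightarrow> bool" where
  "simple_form p A \<longleftrightarrow> (\<exists>u :: nat \<Rightarrow> 'n \<Rightarrow> 'a. \<forall>xs. length xs = p \<longrightarrow>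
      A xs = (1 / fact p) * (\<Sum>\<sigma>\<in>{\<sigma>. \<sigma> permutes {..<p}}.
                 of_int (sign \<sigma>) * (\<Prod>i<p. u (\<sigma> i) (xs ! i))))"

definition full_contr :: "nat \<Rightarrow> ('n::finite list \<Rightarrow> 'a::field) \<Rightarrow> ('n list \<Rightarrow> 'a) \<Rightarrow> 'a" where
  "full_contr p A B = (\<Sum>cs\<in>{cs. length cs = p}. A cs * B cs)"

definition Tmat :: "nat \<Rightarrow> ('n::finite list \<Rightarrow> 'a::field) \<Rightarrow> ('n list \<Rightarrow> 'a) \<Rightarrow> 'n \<Rightarrow> 'n \<Rightarrow> 'a" where
  "Tmat p A B a b = (\<Sum>cs\<in>{cs. length cs = p - 1}. A (a # cs) * B (b # cs))
      - (1 / (2 * of_nat p)) * full_contr p A B * (if a = b then 1 else 0)"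

fun tpow :: "('n::finite \<Rightarrow> 'n \<Rightarrow> 'a::comm_ring_1) \<Rightarrow> nat \<Rightarrow> 'n \<Rightarrow> 'n \<Rightarrow> 'a" where
  "tpow T 0 a b = (if a = b then 1 else 0)"
| "tpow T (Suc k) a b = (\<Sum>c\<in>UNIV. T a c * tpow T k c b)"

definition tr :: "('n::finite \<Rightarrow> 'n \<Rightarrow> 'a::comm_ring_1) \<Rightarrow> 'a" where
  "tr M = (\<Sum>a\<in>UNIV. M a a)"

end

theory Submission
  imports Defs
begin

lemma finite_L: "finite {xs::'n::finite list. length xs = m}"
  using finite_lists_length_eq[of "UNIV::'n set" m] by simp

lemma sum_L_Suc:
  "(\<Sum>xs\<in>{xs::'n::finite list. length xs = Suc m}. f xs) = (\<Sum>a\<in>UNIV. \<Sum>cs\<in>{cs. length cs = m}. f (a#cs))"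
proof -
  have e: "{xs::'n list. length xs = Suc m} = (\<lambda>(a,cs). a#cs) ` (UNIV \<times> {cs. length cs = m})"
    by (auto simp: length_Suc_conv image_iff)
  have i: "inj_on (\<lambda>(a::'n,cs). a#cs) (UNIV \<times> {cs. length cs = m})"
    by (auto simp: inj_on_def)
  show ?thesis unfolding e
    apply (simp add: sum.reindex[OF i] sum.cartesian_product)
    apply (rule sum.cong)
     apply (auto split: prod.split)
    done
qed

definition Cf :: "nat \<Rightarrow> ('n::finite list \<Rightarrow> 'a::comm_ring_1) \<Rightarrow> (nat \<Rightarrow> 'n \<Rightarrow> 'a) \<Rightarrow> 'a" where
  "Cf m B w = (\<Sum>xs\<in>{xs. length xs = m}. (\<Prod>i<m. w i (xs!i)) * B xs)"

lemma Cf_swap: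
  fixes B :: "'n::finite list \<Rightarrow> 'a::field"
  assumes pf: "pform m B" and ab: "a < m" "b < m" "a \<noteq> b"
  shows "Cf m B (w \<circ> Transposition.transpose a b) = - Cf m B w"
proof -
  let ?t = "Transposition.transpose a b"
  define sw where "sw xs = xs[a := xs!b, b := xs!a]" for xs :: "'n list"
  let ?L = "{xs::'n list. length xs = m}"
  have swsw: "sw (sw xs) = xs" if "length xs = m" for xs
    using that ab unfolding sw_def by (simp add: list_eq_iff_nth_eq nth_list_update)
  have swL: "length (sw xs) = length xs" for xs unfolding sw_def by simp
  have "Cf m B (w \<circ> ?t) = (\<Sum>xs\<in>?L. (\<Prod>i<m. w (?t i) (sw xs ! i)) * B (sw xs))"
    unfolding Cf_def
    by (rule sum.reindex_bij_witness[of _ sw sw]) (auto simp: swsw swL)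
  also have "\<dots> = (\<Sum>xs\<in>?L. - ((\<Prod>i<m. w i (xs ! i)) * B xs))"
  proof (rule sum.cong[OF refl])
    fix xs assume xs: "xs \<in> ?L"
    have 1: "sw xs ! i = xs ! (?t i)" if "i < m" for i
      using xs ab that unfolding sw_def by (auto simp: nth_list_update transpose_def)
    have "(\<Prod>i<m. w (?t i) (sw xs ! i)) = (\<Prod>i<m. w (?t i) (xs ! (?t i)))"
      by (rule prod.cong) (auto simp: 1)
    also have "\<dots> = (\<Prod>i<m. w i (xs ! i))"
      using prod.permute[OF permutes_swap_id[of a "{..<m}" b], of "\<lambda>i. w i (xs!i)"] ab
      by (simp add: o_def)
    finally have p: "(\<Prod>i<m. w (?t i) (sw xs ! i)) = (\<Prod>i<m. w i (xs ! i))" .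
    have "B (sw xs) = - B xs" using pf xs ab unfolding pform_def sw_def by auto
    with p show "(\<Prod>i<m. w (?t i) (sw xs ! i)) * B (sw xs) = - ((\<Prod>i<m. w i (xs ! i)) * B xs)"
      by simp
  qed
  also have "\<dots> = - Cf m B w" unfolding Cf_def by (simp add: sum_negf)
  finally show ?thesis .
qed

lemma Cf_perm:
  fixes B :: "'n::finite list \<Rightarrow> 'a::field"
  assumes pf: "pform m B" and s: "\<sigma> permutes {..<m}"
  shows "Cf m B (w \<circ> \<sigma>) = of_int (sign \<sigma>) * Cf m B w"
  using s finite_lessThan[of m]
proof (induction \<sigma> arbitrary: w rule: permutes_induct)
  case id
  then show ?case by (simp add: sign_id)
next
  case (swap a b p)
  have pp: "permutation p" using swap.hyps(4) permutation_permutes by blast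
  have "Cf m B (w \<circ> (Transposition.transpose a b \<circ> p)) = Cf m B ((w \<circ> Transposition.transpose a b) \<circ> p)"
    by (simp add: o_assoc)
  also have "\<dots> = of_int (sign p) * Cf m B (w \<circ> Transposition.transpose a b)" by (rule swap.IH)
  also have "\<dots> = - of_int (sign p) * Cf m B w" using Cf_swap[OF pf] swap.hyps by simp
  also have "sign (Transposition.transpose a b \<circ> p) = - sign p"
    using sign_compose[OF permutation_swap_id pp] swap.hyps by (simp add: sign_swap_id)
  ultimately show ?case by (simp only: of_int_minus mult_minus_left)
qed

lemma Cf_zero:
  fixes B :: "'n::finite list \<Rightarrow> 'a::field_char_0"
  assumes pf: "pform m B" and ab: "a < m" "b < m" "a \<noteq> b" and w: "w a = w b"
  shows "Cf m B w = 0"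
proof -
  have "w \<circ> Transposition.transpose a b = w" using w by (auto simp: transpose_def fun_eq_iff)
  then have "Cf m B w = - Cf m B w" using Cf_swap[OF pf ab, of w] by simp
  then show ?thesis by simp
qed

lemma count_perm:
  assumes j: "j < Suc m"
  shows "card {\<sigma>. \<sigma> permutes {..<Suc m} \<and> \<sigma> 0 = j} = fact m"
proof -
  define N where "N j = card {\<sigma>. \<sigma> permutes {..<Suc m} \<and> \<sigma> 0 = j}" for j
  have NN: "N j = N 0" if j: "j < Suc m" for j
  proof -
    let ?t = "Transposition.transpose 0 j"
    have tp: "?t permutes {..<Suc m}" using j by (intro permutes_swap_id) auto
    have "bij_betw (\<lambda>\<sigma>. ?t \<circ> \<sigma>) {\<sigma>. \<sigma> permutes {..<Suc m} \<and> \<sigma> 0 = 0} {\<sigma>. \<sigma> permutes {..<Suc m} \<and> \<sigma> 0 = j}"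
      by (rule bij_betwI[where g = "\<lambda>\<sigma>. ?t \<circ> \<sigma>"]) (auto simp: permutes_compose[OF _ tp] fun_eq_iff)
    then show ?thesis unfolding N_def by (simp add: bij_betw_same_card)
  qed
  let ?P = "{\<sigma>. \<sigma> permutes {..<Suc m}}"
  have fin: "finite ?P" by (rule finite_permutations) simp
  have "?P = (\<Union>j\<in>{..<Suc m}. {\<sigma>. \<sigma> permutes {..<Suc m} \<and> \<sigma> 0 = j})"
    using permutes_in_image by fastforce
  then have "card ?P = card (\<Union>j\<in>{..<Suc m}. {\<sigma>. \<sigma> permutes {..<Suc m} \<and> \<sigma> 0 = j})" by (rule arg_cong)
  also have "\<dots> = (\<Sum>j<Suc m. N j)" unfolding N_def
    apply (rule card_UN_disjoint)
      apply simp
     apply (intro ballI)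
     apply (rule finite_subset[OF _ fin])
     apply blast
    apply blast
    done
  also have "\<dots> = (\<Sum>j<Suc m. N 0)" by (rule sum.cong[OF refl], rule NN, simp)
  also have "\<dots> = Suc m * N 0" by simp
  finally have e: "card ?P = Suc m * N 0" .
  have cP: "card ?P = fact (Suc m)" by (rule card_permutations) simp_all
  have "fact (Suc m) = Suc m * N 0" using e cP by simp
  then have "N 0 = fact m" by (simp add: fact_Suc del: mult_Suc)
  then show ?thesis using NN[OF j] unfolding N_def by simp
qed

lemma main_sq:
  fixes A B :: "'n::finite list \<Rightarrow> 'a::field_char_0" and u :: "nat \<Rightarrow> 'n \<Rightarrow> 'a"
  assumes pfB: "pform (Suc m) B"
    and A: "\<And>xs. length xs = Suc m \<Longrightarrow> A xs = (1 / fact (Suc m)) * (\<Sum>\<sigma>\<in>{\<sigma>. \<sigma> permutes {..<Suc m}}.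
                 of_int (sign \<sigma>) * (\<Prod>i<Suc m. u (\<sigma> i) (xs ! i)))"
    and M: "\<And>a b. M a b = (\<Sum>cs\<in>{cs. length cs = m}. A (a # cs) * B (b # cs))"
  shows "(\<Sum>c\<in>UNIV. M a c * M c b) = full_contr (Suc m) A B / of_nat (Suc m) * M a b"
proof -
  let ?P = "{\<sigma>. \<sigma> permutes {..<Suc m}}"
  let ?L = "{cs::'n list. length cs = m}"
  define F :: 'a where "F = 1 / fact (Suc m)"
  define sg :: "(nat \<Rightarrow> nat) \<Rightarrow> 'a" where "sg \<sigma> = of_int (sign \<sigma>)" for \<sigma>
  define E where "E \<sigma> b = (\<Sum>cs\<in>?L. (\<Prod>i<m. u (\<sigma> (Suc i)) (cs!i)) * B (b#cs))" for \<sigma> b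
  define C0 where "C0 = Cf (Suc m) B u"
  have A': "A xs = F * (\<Sum>\<sigma>\<in>?P. sg \<sigma> * (\<Prod>i<Suc m. u (\<sigma> i) (xs ! i)))" if "length xs = Suc m" for xs
    using A[OF that] unfolding F_def sg_def by simp
  have sgsg: "sg \<sigma> * sg \<sigma> = 1" for \<sigma> unfolding sg_def by (simp flip: of_int_mult)
  have M_eq: "M a b = F * (\<Sum>\<sigma>\<in>?P. sg \<sigma> * u (\<sigma> 0) a * E \<sigma> b)" for a b
  proof -
    have "M a b = (\<Sum>cs\<in>?L. (F * (\<Sum>\<sigma>\<in>?P. sg \<sigma> * (u (\<sigma> 0) a * (\<Prod>i<m. u (\<sigma> (Suc i)) (cs!i))))) * B (b#cs))"
      unfolding M by (intro sum.cong refl) (simp only: A' length_Cons mem_Collect_eq prod.lessThan_Suc_shift nth_Cons_0 nth_Cons_Suc)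
    also have "\<dots> = F * (\<Sum>cs\<in>?L. \<Sum>\<sigma>\<in>?P. sg \<sigma> * u (\<sigma> 0) a * ((\<Prod>i<m. u (\<sigma> (Suc i)) (cs!i)) * B (b#cs)))"
      by (simp only: sum_distrib_left sum_distrib_right mult.assoc)
    also have "\<dots> = F * (\<Sum>\<sigma>\<in>?P. \<Sum>cs\<in>?L. sg \<sigma> * u (\<sigma> 0) a * ((\<Prod>i<m. u (\<sigma> (Suc i)) (cs!i)) * B (b#cs)))"
      by (rule arg_cong[where f = "\<lambda>x. F * x"], rule sum.swap)
    also have "\<dots> = F * (\<Sum>\<sigma>\<in>?P. sg \<sigma> * u (\<sigma> 0) a * E \<sigma> b)"
      unfolding E_def by (simp only: sum_distrib_left)
    finally show ?thesis .
  qed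
  have bracket: "(\<Sum>c\<in>UNIV. E \<sigma> c * u j c) = Cf (Suc m) B (\<lambda>i. if i = 0 then u j else u (\<sigma> i))" for \<sigma> j
    unfolding Cf_def sum_L_Suc E_def
    apply (simp only: prod.lessThan_Suc_shift nth_Cons_0 nth_Cons_Suc if_True Suc_neq_Zero if_False sum_distrib_right)
    apply (intro sum.cong refl)
    apply (simp add: mult_ac)
    done
  have bval: "Cf (Suc m) B (\<lambda>i. if i = 0 then u (\<tau> 0) else u (\<sigma> i)) = (if \<tau> 0 = \<sigma> 0 then sg \<sigma> * C0 else 0)"
    if s: "\<sigma> \<in> ?P" and t: "\<tau> \<in> ?P" for \<sigma> \<tau>
  proof (cases "\<tau> 0 = \<sigma> 0")
    case True
    then have "(\<lambda>i. if i = 0 then u (\<tau> 0) else u (\<sigma> i)) = u \<circ> \<sigma>" by (auto simp: fun_eq_iff)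
    then show ?thesis using True Cf_perm[OF pfB, of \<sigma> u] s unfolding sg_def C0_def by simp
  next
    case False
    have "\<tau> 0 \<in> {..<Suc m}" using t permutes_in_image by fastforce
    then have "\<tau> 0 \<in> \<sigma> ` {..<Suc m}" using permutes_image[of \<sigma> "{..<Suc m}"] s by simp
    then obtain j where j: "j < Suc m" "\<sigma> j = \<tau> 0" by auto
    have "j \<noteq> 0"
    proof
      assume "j = 0" with False j(2) show False by simp
    qed
    have "Cf (Suc m) B (\<lambda>i. if i = 0 then u (\<tau> 0) else u (\<sigma> i)) = 0"
      apply (rule Cf_zero[OF pfB, of 0 j])
      using j \<open>j \<noteq> 0\<close> apply simp_all
      done
    then show ?thesis using False by simp
  qed
  have cnt: "(\<Sum>\<sigma>\<in>?P. if \<sigma> 0 = j then X else 0) = of_nat (fact m) * X" if j: "j < Suc m" for j X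
  proof -
    have "(\<Sum>\<sigma>\<in>?P. if \<sigma> 0 = j then X else 0) = (\<Sum>\<sigma>\<in>{\<sigma>. \<sigma> permutes {..<Suc m} \<and> \<sigma> 0 = j}. X)"
      by (subst sum.inter_filter[symmetric]) (auto intro: finite_permutations intro!: sum.cong)
    then show ?thesis using count_perm[OF j] by simp
  qed
  have mFF: "(F * x) * (F * y) = F * F * (x * y)" for x y :: 'a by (simp add: mult_ac)
  have ss: "s * t * x * y * (s * c) = (s * s) * (t * x * y * c)" for s t x y c :: 'a by (simp only: mult_ac)
  have term1: "(\<Sum>c\<in>UNIV. (sg \<sigma> * u (\<sigma> 0) a * E \<sigma> c) * (sg \<tau> * u (\<tau> 0) c * E \<tau> b))
     = sg \<sigma> * sg \<tau> * u (\<sigma> 0) a * E \<tau> b * (\<Sum>c\<in>UNIV. E \<sigma> c * u (\<tau> 0) c)" for \<sigma> \<tau>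
    apply (subst sum_distrib_left)
    apply (rule sum.cong[OF refl])
    apply (simp only: mult_ac)
    done
  have term2: "sg \<sigma> * sg \<tau> * u (\<sigma> 0) a * E \<tau> b * (\<Sum>c\<in>UNIV. E \<sigma> c * u (\<tau> 0) c)
     = (if \<sigma> 0 = \<tau> 0 then sg \<tau> * u (\<tau> 0) a * E \<tau> b * C0 else 0)"
    if "\<sigma> \<in> ?P" "\<tau> \<in> ?P" for \<sigma> \<tau>
  proof (cases "\<sigma> 0 = \<tau> 0")
    case True
    then show ?thesis unfolding bracket bval[OF that] using True by (simp add: ss sgsg)
  next
    case False
    then show ?thesis unfolding bracket bval[OF that] by auto
  qed
  have "(\<Sum>c\<in>UNIV. M a c * M c b)
      = (\<Sum>c\<in>UNIV. (F * (\<Sum>\<sigma>\<in>?P. sg \<sigma> * u (\<sigma> 0) a * E \<sigma> c)) * (F * (\<Sum>\<tau>\<in>?P. sg \<tau> * u (\<tau> 0) c * E \<tau> b)))"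
    by (simp only: M_eq)
  also have "\<dots> = F * F * (\<Sum>c\<in>UNIV. \<Sum>\<sigma>\<in>?P. \<Sum>\<tau>\<in>?P. (sg \<sigma> * u (\<sigma> 0) a * E \<sigma> c) * (sg \<tau> * u (\<tau> 0) c * E \<tau> b))"
    apply (rule trans[OF _ sum_distrib_left[symmetric]])
    apply (rule sum.cong[OF refl])
    apply (subst mFF)
    apply (subst sum_product)
    apply (rule refl)
    done
  also have "\<dots> = F * F * (\<Sum>\<sigma>\<in>?P. \<Sum>\<tau>\<in>?P. \<Sum>c\<in>UNIV. (sg \<sigma> * u (\<sigma> 0) a * E \<sigma> c) * (sg \<tau> * u (\<tau> 0) c * E \<tau> b))"
    apply (intro arg_cong[where f = "\<lambda>x. F * F * x"])
    apply (rule trans[OF sum.swap])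
    apply (rule sum.cong[OF refl])
    apply (rule sum.swap)
    done
  also have "\<dots> = F * F * (\<Sum>\<sigma>\<in>?P. \<Sum>\<tau>\<in>?P. sg \<sigma> * sg \<tau> * u (\<sigma> 0) a * E \<tau> b * (\<Sum>c\<in>UNIV. E \<sigma> c * u (\<tau> 0) c))"
    apply (rule arg_cong[where f = "\<lambda>x. F * F * x"])
    apply (rule sum.cong[OF refl])+
    apply (rule term1)
    done
  also have "\<dots> = F * F * (\<Sum>\<sigma>\<in>?P. \<Sum>\<tau>\<in>?P. if \<sigma> 0 = \<tau> 0 then sg \<tau> * u (\<tau> 0) a * E \<tau> b * C0 else 0)"
    apply (rule arg_cong[where f = "\<lambda>x. F * F * x"])
    apply (rule sum.cong[OF refl])+
    apply (rule term2)
     apply assumption+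
    done
  also have "\<dots> = F * F * (\<Sum>\<tau>\<in>?P. \<Sum>\<sigma>\<in>?P. if \<sigma> 0 = \<tau> 0 then sg \<tau> * u (\<tau> 0) a * E \<tau> b * C0 else 0)"
    by (rule arg_cong[where f = "\<lambda>x. F * F * x"], rule sum.swap)
  also have "\<dots> = F * F * (\<Sum>\<tau>\<in>?P. of_nat (fact m) * (sg \<tau> * u (\<tau> 0) a * E \<tau> b * C0))"
    apply (rule arg_cong[where f = "\<lambda>x. F * F * x"])
    apply (rule sum.cong[OF refl])
    apply (rule cnt)
    using permutes_in_image apply fastforce
    done
  also have "\<dots> = (F * of_nat (fact m) * C0) * (F * (\<Sum>\<tau>\<in>?P. sg \<tau> * u (\<tau> 0) a * E \<tau> b))"
    apply (simp only: sum_distrib_left)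
    apply (rule sum.cong[OF refl])
    apply (simp only: mult_ac)
    done
  also have "\<dots> = (F * of_nat (fact m) * C0) * M a b"
    by (simp only: M_eq)
  finally have sq0: "(\<Sum>c\<in>UNIV. M a c * M c b) = (F * of_nat (fact m) * C0) * M a b" .
  have fm: "F * of_nat (fact m) = 1 / of_nat (Suc m)"
    unfolding F_def by (simp add: fact_Suc field_simps del: of_nat_Suc)
  have sq: "(\<Sum>c\<in>UNIV. M a c * M c b) = C0 / of_nat (Suc m) * M a b"
    unfolding sq0 fm by simp
  have "full_contr (Suc m) A B = (\<Sum>xs\<in>{xs. length xs = Suc m}. (F * (\<Sum>\<sigma>\<in>?P. sg \<sigma> * (\<Prod>i<Suc m. u (\<sigma> i) (xs ! i)))) * B xs)"
    unfolding full_contr_def by (intro sum.cong refl) (simp add: A')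
  also have "\<dots> = F * (\<Sum>xs\<in>{xs. length xs = Suc m}. \<Sum>\<sigma>\<in>?P. sg \<sigma> * ((\<Prod>i<Suc m. u (\<sigma> i) (xs ! i)) * B xs))"
    by (simp only: sum_distrib_right sum_distrib_left mult.assoc)
  also have "\<dots> = F * (\<Sum>\<sigma>\<in>?P. \<Sum>xs\<in>{xs. length xs = Suc m}. sg \<sigma> * ((\<Prod>i<Suc m. u (\<sigma> i) (xs ! i)) * B xs))"
    by (rule arg_cong[where f = "\<lambda>x. F * x"], rule sum.swap)
  also have "\<dots> = F * (\<Sum>\<sigma>\<in>?P. sg \<sigma> * Cf (Suc m) B (u \<circ> \<sigma>))"
    unfolding Cf_def by (simp only: sum_distrib_left o_apply)
  also have "\<dots> = F * (\<Sum>\<sigma>\<in>?P. C0)"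
    apply (rule arg_cong[where f = "\<lambda>x. F * x"])
    apply (rule sum.cong[OF refl])
    apply (simp add: Cf_perm[OF pfB] C0_def mult.assoc[symmetric] sg_def flip: of_int_mult)
    done
  also have "\<dots> = C0"
  proof -
    have cP: "card ?P = fact (Suc m)" by (rule card_permutations) simp_all
    show ?thesis unfolding F_def by (simp add: cP del: fact_Suc)
  qed
  finally show ?thesis using sq by simp
qed

lemma if_mult_zero: "(if P then (q::'a::comm_ring_1) else 0) * x = (if P then q * x else 0)" by simp

lemma tpow_SS:
  fixes T :: "'n::finite \<Rightarrow> 'n \<Rightarrow> 'a::comm_ring_1"
  assumes T2: "\<And>a b. (\<Sum>c\<in>UNIV. T a c * T c b) = (if a = b then q else 0)"
  shows "tpow T (Suc (Suc k)) a b = q * tpow T k a b"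
proof -
  have "tpow T (Suc (Suc k)) a b = (\<Sum>c\<in>UNIV. \<Sum>d\<in>UNIV. T a c * T c d * tpow T k d b)"
    by (simp add: sum_distrib_left mult.assoc)
  also have "\<dots> = (\<Sum>d\<in>UNIV. \<Sum>c\<in>UNIV. T a c * T c d * tpow T k d b)"
    by (rule sum.swap)
  also have "\<dots> = (\<Sum>d\<in>UNIV. (\<Sum>c\<in>UNIV. T a c * T c d) * tpow T k d b)"
    by (simp only: sum_distrib_right)
  also have "\<dots> = (\<Sum>d\<in>UNIV. (if a = d then q else 0) * tpow T k d b)"
    by (simp only: T2)
  also have "\<dots> = q * tpow T k a b"
    by (simp add: sum.delta if_mult_zero)
  finally show ?thesis .
qed

lemma tpow_par:
  fixes T :: "'n::finite \<Rightarrow> 'n \<Rightarrow> 'a::comm_ring_1"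
  assumes T2: "\<And>a b. (\<Sum>c\<in>UNIV. T a c * T c b) = (if a = b then q else 0)"
  shows "tpow T (2 * j) a b = q ^ j * (if a = b then 1 else 0)"
    and "tpow T (Suc (2 * j)) a b = q ^ j * T a b"
proof -
  show "tpow T (2 * j) a b = q ^ j * (if a = b then 1 else 0)"
  proof (induction j arbitrary: a b)
    case 0 then show ?case by simp
  next
    case (Suc j)
    have "tpow T (2 * Suc j) a b = tpow T (Suc (Suc (2 * j))) a b" by simp
    then show ?case using tpow_SS[OF T2, of "2*j" a b] Suc by simp
  qed
  show "tpow T (Suc (2 * j)) a b = q ^ j * T a b"
  proof (induction j arbitrary: a b)
    case 0 then show ?case by (simp add: if_distrib sum.delta' cong: if_cong)
  next
    case (Suc j)
    have "tpow T (Suc (2 * Suc j)) a b = tpow T (Suc (Suc (Suc (2 * j)))) a b" by simp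
    then show ?case using tpow_SS[OF T2, of "Suc (2*j)" a b] Suc by simp
  qed
qed

theorem corollary1:
  fixes A B :: "'n::finite list \<Rightarrow> 'a::field_char_0" and p k :: nat
  assumes "p \<ge> 1"
    and "pform p A" and "pform p B"
    and "simple_form p A"
    and "CARD('n) \<noteq> 2 * p"
    and "k \<ge> 1"
  shows "tr (tpow (Tmat p A B) k) =
    (if even k
     then of_nat CARD('n) / (of_nat CARD('n) - 2 * of_nat p) ^ k * (tr (Tmat p A B)) ^ k
     else 1 / (of_nat CARD('n) - 2 * of_nat p) ^ (k - 1) * (tr (Tmat p A B)) ^ k)"
proof -
  obtain m where pm: "p = Suc m" using assms(1) by (cases p) auto
  obtain u :: "nat \<Rightarrow> 'n \<Rightarrow> 'a" where u: "\<And>xs. length xs = p \<Longrightarrow> A xs = (1 / fact p) * (\<Sum>\<sigma>\<in>{\<sigma>. \<sigma> permutes {..<p}}.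
                 of_int (sign \<sigma>) * (\<Prod>i<p. u (\<sigma> i) (xs ! i)))"
    using assms(4) unfolding simple_form_def by blast
  define M where "M a b = (\<Sum>cs\<in>{cs. length cs = m}. A (a#cs) * B (b#cs))" for a b
  define s where "s = full_contr p A B"
  define h :: 'a where "h = 1 / (2 * of_nat p) * s"
  define T where "T = Tmat p A B"
  define n :: 'a where "n = of_nat CARD('n)"
  have Tm: "T a b = M a b - (if a = b then h else 0)" for a b
    unfolding T_def Tmat_def M_def h_def s_def pm by simp
  have s2: "s = 2 * of_nat p * h" unfolding h_def pm by (simp add: field_simps del: of_nat_Suc)
  have Msq: "(\<Sum>c\<in>UNIV. M a c * M c b) = 2 * h * M a b" for a b
  proof -
    have "(\<Sum>c\<in>UNIV. M a c * M c b) = full_contr (Suc m) A B / of_nat (Suc m) * M a b"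
      by (rule main_sq[of m B A u M a b]) (use assms(3) u M_def pm in auto)
    moreover have fc: "full_contr (Suc m) A B = 2 * of_nat (Suc m) * h" using s2 unfolding s_def pm .
    moreover have "2 * of_nat (Suc m) * h / of_nat (Suc m) = (2 * h :: 'a)"
      by (simp add: field_simps del: of_nat_Suc)
    ultimately show ?thesis by (simp only: fc times_divide_eq_left[symmetric])
  qed
  have T2: "(\<Sum>c\<in>UNIV. T a c * T c b) = (if a = b then h^2 else 0)" for a b
  proof -
    have e: "(M a c - (if a = c then h else 0)) * (M c b - (if c = b then h else 0))
      = M a c * M c b - (if a = c then h * M c b else 0) - (if c = b then h * M a c else 0)
        + (if a = c then (if c = b then h * h else 0) else 0)" for c
      by (auto simp: algebra_simps)
    show ?thesis unfolding Tm e
      by (simp add: sum.distrib sum_subtractf sum.delta sum.delta' Msq power2_eq_square)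
  qed
  have trM: "(\<Sum>a\<in>UNIV. M a a) = s"
    unfolding s_def full_contr_def pm sum_L_Suc M_def by simp
  have trT: "tr T = s - n * h"
    unfolding tr_def Tm n_def by (simp add: sum_subtractf trM)
  define d where "d = n - 2 * of_nat p"
  have d0: "d \<noteq> 0"
  proof
    assume "d = 0"
    then have "(of_nat CARD('n) :: 'a) = of_nat (2 * p)" unfolding d_def n_def by simp
    then have "CARD('n) = 2 * p" using of_nat_eq_iff by blast
    with assms(5) show False by simp
  qed
  have trT': "tr T = - h * d" unfolding trT s2 d_def by (simp add: algebra_simps)
  have goal: "tr (tpow T k) = (if even k then n / d ^ k * (tr T) ^ k else 1 / d ^ (k - 1) * (tr T) ^ k)"
  proof (cases "even k")
    case True
    then obtain j where kj: "k = 2 * j" by (rule evenE)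
    have "tr (tpow T k) = (\<Sum>a\<in>(UNIV::'n set). (h^2)^j * 1)"
      unfolding tr_def kj tpow_par(1)[OF T2] by simp
    also have "\<dots> = n * h ^ k" unfolding n_def kj by (simp add: power_mult)
    finally have l: "tr (tpow T k) = n * h ^ k" .
    have "n / d ^ k * (tr T) ^ k = n * h ^ k"
      unfolding trT' kj using d0 by (simp add: power_mult_distrib power_mult[symmetric] field_simps)
    then show ?thesis using l True by simp
  next
    case False
    then obtain j where kj: "k = Suc (2 * j)" using oddE by (metis Suc_eq_plus1)
    have "tr (tpow T k) = (\<Sum>a\<in>UNIV. (h^2)^j * T a a)"
      unfolding tr_def kj tpow_par(2)[OF T2] by simp
    also have "\<dots> = (h^2)^j * tr T" unfolding tr_def by (simp add: sum_distrib_left)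
    finally have l: "tr (tpow T k) = (h^2)^j * tr T" .
    have "1 / d ^ (k - 1) * (tr T) ^ k = (h^2)^j * tr T"
      unfolding trT' kj using d0 by (simp add: power_mult_distrib power_mult[symmetric] field_simps)
    then show ?thesis using l False by simp
  qed
  then show ?thesis unfolding T_def n_def d_def .
qed

end
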